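(* Let $a<b$ and let $f:[a,b]\rightarrow\mathbb{R}$ be an absolutely continuous mapping with $f'\in L^2[a,b]$. Define \[ \sigma(f')=\|f'\|_2^2-\frac{(f(b)-f(a))^2}{b-a}. \] Then for all $x\in[a,\frac{a+b}{2}]$, \[ \left|\frac{f(x)+f(a+b-x)}{2}-\frac{1}{b-a}\int_{a}^{b}f(t)\,dt\right| \leq (b-a)^{-1/2} \left[\frac{(b-a)^2}{48}+\left(x-\frac{3a+b}{4}\right)^2\right]^{1/2}\sqrt{\sigma(f')}. \] This inequality is sharp in the sense that the constant $\frac{1}{48}$ on the right-hand side cannot be replaced by a smaller one.
   Context: $\|g\|_2=\left(\int_a^b g(t)^2\,dt\right)^{1/2}$. *)

theory Defs
  imports "HOL-Analysis.Analysis"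
begin

definition abs_continuous_on :: "real \<Rightarrow> real \<Rightarrow> (real \<Rightarrow> real) \<Rightarrow> bool" where
  "abs_continuous_on a b f \<longleftrightarrow>
     (\<forall>e>0. \<exists>d>0. \<forall>(n::nat) (x::nat \<Rightarrow> real) (y::nat \<Rightarrow> real).
        (\<forall>k<n. a \<le> x k \<and> x k \<le> y k \<and> y k \<le> b) \<and>
        (\<forall>i<n. \<forall>j<n. i \<noteq> j \<longrightarrow> y i \<le> x j \<or> y j \<le> x i) \<and>
        (\<Sum>k<n. y k - x k) < d
        \<longrightarrow> (\<Sum>k<n. \<bar>f (y k) - f (x k)\<bar>) < e)"

definition AC_L2_setting :: "real \<Rightarrow> real \<Rightarrow> (real \<Rightarrow> real) \<Rightarrow> (real \<Rightarrow> real) \<Rightarrow> bool" where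
  "AC_L2_setting a b f f' \<longleftrightarrow>
     a < b \<and> abs_continuous_on a b f \<and>
     (AE t in lebesgue_on {a..b}. (f has_real_derivative f' t) (at t within {a..b})) \<and>
     f' \<in> borel_measurable (lebesgue_on {a..b}) \<and>
     integrable (lebesgue_on {a..b}) (\<lambda>t. (f' t)\<^sup>2)"

definition sigma :: "real \<Rightarrow> real \<Rightarrow> (real \<Rightarrow> real) \<Rightarrow> (real \<Rightarrow> real) \<Rightarrow> real" where
  "sigma a b f f' = (LINT t|lebesgue_on {a..b}. (f' t)\<^sup>2) - (f b - f a)\<^sup>2 / (b - a)"

definition trap_bound :: "real \<Rightarrow> real \<Rightarrow> real \<Rightarrow> (real \<Rightarrow> real) \<Rightarrow> (real \<Rightarrow> real) \<Rightarrow> real \<Rightarrow> real" where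
  "trap_bound C a b f f' x =
     (b - a) powr (-1/2) * sqrt (C * (b - a)\<^sup>2 + (x - (3*a + b)/4)\<^sup>2) * sqrt (sigma a b f f')"

definition trap_lhs :: "real \<Rightarrow> real \<Rightarrow> (real \<Rightarrow> real) \<Rightarrow> real \<Rightarrow> real" where
  "trap_lhs a b f x =
     \<bar>(f x + f (a + b - x)) / 2 - (1 / (b - a)) * (LINT t|lebesgue_on {a..b}. f t)\<bar>"

end

theory Submission
  imports Defs
begin


definition acok :: "real \<Rightarrow> real \<Rightarrow> nat \<Rightarrow> (nat \<Rightarrow> real) \<Rightarrow> (nat \<Rightarrow> real) \<Rightarrow> bool" where
  "acok a b n x y \<longleftrightarrow> (\<forall>k<n. a \<le> x k \<and> x k \<le> y k \<and> y k \<le> b) \<and>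
        (\<forall>i<n. \<forall>j<n. i \<noteq> j \<longrightarrow> y i \<le> x j \<or> y j \<le> x i)"

lemma ac_iff: "abs_continuous_on a b f \<longleftrightarrow> (\<forall>e>0. \<exists>d>0. \<forall>n x y. acok a b n x y \<and>
   (\<Sum>k<n. y k - x k) < d \<longrightarrow> (\<Sum>k<n. \<bar>f (y k) - f (x k)\<bar>) < e)"
  unfolding abs_continuous_on_def acok_def by simp

lemma acD:
  assumes "abs_continuous_on a b f" "e > 0"
  shows "\<exists>d>0. \<forall>n x y. acok a b n x y \<and>
   (\<Sum>k<n. y k - x k) < d \<longrightarrow> (\<Sum>k<n. \<bar>f (y k) - f (x k)\<bar>) < e"
  using assms unfolding ac_iff by simp

lemma ac_cont:
  assumes "abs_continuous_on a b f"
  shows "continuous_on {a..b} f"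
  unfolding continuous_on_iff
proof (intro ballI allI impI)
  fix x e :: real assume x: "x \<in> {a..b}" and e: "0 < e"
  from acD[OF assms e] obtain d where d: "d > 0" and H: "\<forall>n x y. acok a b n x y \<and>
   (\<Sum>k<n. y k - x k) < d \<longrightarrow> (\<Sum>k<n. \<bar>f (y k) - f (x k)\<bar>) < e" by blast
  show "\<exists>d>0. \<forall>x'\<in>{a..b}. dist x' x < d \<longrightarrow> dist (f x') (f x) < e"
  proof (intro exI[of _ d] conjI ballI impI)
    show "d > 0" by (fact d)
    fix y assume y: "y \<in> {a..b}" and "dist y x < d"
    then have "(\<Sum>k<(1::nat). (\<lambda>_. max x y) k - (\<lambda>_. min x y) k) < d" by (auto simp: dist_real_def)
    moreover have "acok a b 1 (\<lambda>_. min x y) (\<lambda>_. max x y)"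
      using x y by (auto simp: acok_def)
    ultimately have "(\<Sum>k<(1::nat). \<bar>f ((\<lambda>_. max x y) k) - f ((\<lambda>_. min x y) k)\<bar>) < e"
      using H by blast
    then show "dist (f y) (f x) < e"
      by (cases "x \<le> y") (auto simp: dist_real_def max_def min_def abs_minus_commute)
  qed
qed


lemma ac_dom:
  assumes ac: "abs_continuous_on a b f" and M: "M \<ge> 0" and L: "L \<ge> 0"
    and dom: "\<And>x y. a \<le> x \<Longrightarrow> x \<le> y \<Longrightarrow> y \<le> b \<Longrightarrow> \<bar>h y - h x\<bar> \<le> M * \<bar>f y - f x\<bar> + L * (y - x)"
  shows "abs_continuous_on a b h"
  unfolding ac_iff
proof (intro allI impI)
  fix e :: real assume e: "e > 0"
  from acD[OF ac, of "e / (2 * (M + 1))"] e M obtain d1 where d1: "d1 > 0" and H: "\<forall>n x y. acok a b n x y \<and>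
   (\<Sum>k<n. y k - x k) < d1 \<longrightarrow> (\<Sum>k<n. \<bar>f (y k) - f (x k)\<bar>) < e / (2 * (M + 1))" by auto
  define d where "d = min d1 (e / (2 * (L + 1)))"
  have d: "d > 0" using d1 e L by (simp add: d_def)
  show "\<exists>d>0. \<forall>n x y. acok a b n x y \<and> (\<Sum>k<n. y k - x k) < d \<longrightarrow> (\<Sum>k<n. \<bar>h (y k) - h (x k)\<bar>) < e"
  proof (intro exI[of _ d] conjI allI impI d)
    fix n x y assume A: "acok a b n x y \<and> (\<Sum>k<n. y k - x k) < d"
    then have S1: "(\<Sum>k<n. \<bar>f (y k) - f (x k)\<bar>) < e / (2 * (M + 1))"
      using H by (auto simp: d_def)
    have S2: "(\<Sum>k<n. y k - x k) \<le> e / (2 * (L + 1))" using A by (auto simp: d_def)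
    have "(\<Sum>k<n. \<bar>h (y k) - h (x k)\<bar>) \<le> (\<Sum>k<n. M * \<bar>f (y k) - f (x k)\<bar> + L * (y k - x k))"
      using A by (intro sum_mono dom) (auto simp: acok_def)
    also have "\<dots> = M * (\<Sum>k<n. \<bar>f (y k) - f (x k)\<bar>) + L * (\<Sum>k<n. y k - x k)"
      by (simp add: sum.distrib sum_distrib_left)
    also have "\<dots> \<le> M * (e / (2 * (M + 1))) + L * (e / (2 * (L + 1)))"
      using S1 S2 M L by (intro add_mono mult_left_mono) auto
    also have "\<dots> < e"
    proof -
      have "M * (e / (2 * (M + 1))) < e / 2" using M e by (simp add: field_simps)
      moreover have "L * (e / (2 * (L + 1))) < e / 2" using L e by (simp add: field_simps)
      ultimately show ?thesis by linarith
    qed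
    finally show "(\<Sum>k<n. \<bar>h (y k) - h (x k)\<bar>) < e" .
  qed
qed

lemma ac_sub:
  assumes "abs_continuous_on a b f" "a \<le> p" "q \<le> b"
  shows "abs_continuous_on p q f"
proof -
  have mono: "acok a b n x y" if "acok p q n x y" for n x y
    using that assms(2,3) unfolding acok_def by (meson order_trans)
  show ?thesis unfolding ac_iff
  proof (intro allI impI)
    fix e :: real assume e: "e > 0"
    from acD[OF assms(1) e] obtain d where "d > 0" and H: "\<forall>n x y. acok a b n x y \<and>
      (\<Sum>k<n. y k - x k) < d \<longrightarrow> (\<Sum>k<n. \<bar>f (y k) - f (x k)\<bar>) < e" by blast
    then show "\<exists>d>0. \<forall>n x y. acok p q n x y \<and> (\<Sum>k<n. y k - x k) < d \<longrightarrow> (\<Sum>k<n. \<bar>f (y k) - f (x k)\<bar>) < e"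
      using mono by blast
  qed
qed



lemma interiors_disjoint_real:
  fixes u1 v1 u2 v2 :: real
  assumes "u1 < v1" "u2 < v2" "{u1<..<v1} \<inter> {u2<..<v2} = {}"
  shows "v1 \<le> u2 \<or> v2 \<le> u1"
proof (rule ccontr)
  assume "\<not> (v1 \<le> u2 \<or> v2 \<le> u1)"
  then have "(max u1 u2 + min v1 v2) / 2 \<in> {u1<..<v1} \<inter> {u2<..<v2}"
    using assms(1,2) by (auto simp: max_def min_def)
  then show False using assms(3) by blast
qed

lemma ftc_ac:
  fixes \<Phi> \<phi> :: "real \<Rightarrow> real"
  assumes pq: "p \<le> q" and ac: "abs_continuous_on p q \<Phi>" and N: "negligible N"
    and der: "\<And>t. t \<in> {p..q} - N \<Longrightarrow> (\<Phi> has_real_derivative \<phi> t) (at t within {p..q})"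
  shows "(\<phi> has_integral (\<Phi> q - \<Phi> p)) {p..q}"
proof -
  define \<psi> where "\<psi> t = (if t \<in> N then 0 else \<phi> t)" for t
  have "(\<psi> has_integral (\<Phi> q - \<Phi> p)) {p..q}"
    unfolding has_integral_real
  proof (intro allI impI)
    fix e :: real assume e: "e > 0"
    from acD[OF ac, of "e/2"] e obtain \<delta> where \<delta>: "\<delta> > 0" and H: "\<forall>n x y. acok p q n x y \<and>
      (\<Sum>k<n. y k - x k) < \<delta> \<longrightarrow> (\<Sum>k<n. \<bar>\<Phi> (y k) - \<Phi> (x k)\<bar>) < e/2" by auto
    have "(indicator N has_integral (0::real)) {p..q}"
      using N unfolding negligible_def by (metis box_real(2))
    then obtain \<gamma>0 where g0: "gauge \<gamma>0" and G0: "\<And>\<D>. \<D> tagged_division_of {p..q} \<Longrightarrow> \<gamma>0 fine \<D> \<Longrightarrow>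
        \<bar>(\<Sum>(x,K)\<in>\<D>. Henstock_Kurzweil_Integration.content K * indicator N x)\<bar> < \<delta>"
      unfolding has_integral_real using \<delta> by (auto simp: split_beta)
    define \<epsilon> where "\<epsilon> = e / (2 * (q - p + 1))"
    have \<epsilon>: "\<epsilon> > 0" using e pq by (simp add: \<epsilon>_def)
    have "\<forall>t. \<exists>r>0. t \<in> {p..q} - N \<longrightarrow> (\<forall>y\<in>{p..q}. \<bar>y - t\<bar> < r \<longrightarrow>
              \<bar>\<Phi> y - \<Phi> t - (y - t) * \<phi> t\<bar> \<le> \<epsilon> * \<bar>y - t\<bar>)"
    proof
      fix t
      show "\<exists>r>0. t \<in> {p..q} - N \<longrightarrow> (\<forall>y\<in>{p..q}. \<bar>y - t\<bar> < r \<longrightarrow>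
              \<bar>\<Phi> y - \<Phi> t - (y - t) * \<phi> t\<bar> \<le> \<epsilon> * \<bar>y - t\<bar>)"
      proof (cases "t \<in> {p..q} - N")
        case True
        then have "(\<Phi> has_derivative (*) (\<phi> t)) (at t within {p..q})"
          using der by (simp add: has_field_derivative_def)
        then obtain r where "r > 0" "\<forall>y\<in>{p..q}. norm (y - t) < r \<longrightarrow>
             norm (\<Phi> y - \<Phi> t - \<phi> t * (y - t)) \<le> \<epsilon> * norm (y - t)"
          unfolding has_derivative_within_alt using \<epsilon> by blast
        then show ?thesis by (auto simp: mult.commute)
      qed (auto intro: exI[of _ 1])
    qed
    then obtain r where r0: "\<And>t. r t > 0" and r: "\<And>t y. t \<in> {p..q} - N \<Longrightarrow> y \<in> {p..q} \<Longrightarrow> \<bar>y - t\<bar> < r t \<Longrightarrow>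
              \<bar>\<Phi> y - \<Phi> t - (y - t) * \<phi> t\<bar> \<le> \<epsilon> * \<bar>y - t\<bar>"
      by metis
    define \<gamma> where "\<gamma> t = \<gamma>0 t \<inter> ball t (r t)" for t
    have g: "gauge \<gamma>"
      unfolding \<gamma>_def using g0 gauge_ball_dependent[of r] r0 by (intro gauge_Int) auto
    show "\<exists>\<gamma>. gauge \<gamma> \<and> (\<forall>\<D>. \<D> tagged_division_of {p..q} \<and> \<gamma> fine \<D> \<longrightarrow>
        norm ((\<Sum>(x,k)\<in>\<D>. Henstock_Kurzweil_Integration.content k *\<^sub>R \<psi> x) - (\<Phi> q - \<Phi> p)) < e)"
    proof (intro exI[of _ \<gamma>] conjI g allI impI, elim conjE)
      fix \<D> assume D: "\<D> tagged_division_of {p..q}" and fine: "\<gamma> fine \<D>"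
      have fine0: "\<gamma>0 fine \<D>" and fine1: "(\<lambda>t. ball t (r t)) fine \<D>"
        using fine unfolding \<gamma>_def fine_Int by auto
      note Dd = tagged_division_ofD[OF D]
      have Kform: "\<exists>u v. K = {u..v} \<and> u \<le> x \<and> x \<le> v \<and> p \<le> u \<and> v \<le> q \<and> K \<subseteq> ball x (r x)"
        if xK: "(x,K) \<in> \<D>" for x K
      proof -
        obtain u v where K: "K = {u..v}" using Dd(4)[OF xK] unfolding box_real by blast
        moreover have "x \<in> K" "K \<subseteq> {p..q}" using Dd(2,3)[OF xK] by auto
        moreover have "K \<subseteq> ball x (r x)" using fineD[OF fine1 xK] .
        ultimately show ?thesis by auto
      qed
      define T where "T = {z \<in> \<D>. fst z \<in> N \<and> Henstock_Kurzweil_Integration.content (snd z) \<noteq> 0}"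
      have sumPhi: "(\<Sum>(x,K)\<in>\<D>. \<Phi>(Sup K) - \<Phi>(Inf K)) = \<Phi> q - \<Phi> p"
        by (rule additive_tagged_division_1[OF pq D])
      have sumC: "(\<Sum>(x,K)\<in>\<D>. Henstock_Kurzweil_Integration.content K) = q - p"
        using additive_content_tagged_division[of \<D> p q] D pq by (simp add: box_real)
      have tb: "\<bar>Henstock_Kurzweil_Integration.content K * \<psi> x - (\<Phi>(Sup K) - \<Phi>(Inf K))\<bar> \<le> \<epsilon> * Henstock_Kurzweil_Integration.content K +
          (if (x,K) \<in> T then \<bar>\<Phi>(Sup K) - \<Phi>(Inf K)\<bar> else 0)" if xK: "(x,K) \<in> \<D>" for x K
      proof -
        obtain u v where K: "K = {u..v}" "u \<le> x" "x \<le> v" "p \<le> u" "v \<le> q" "K \<subseteq> ball x (r x)"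
          using Kform[OF xK] by blast
        have SI: "Sup K = v" "Inf K = u" "Henstock_Kurzweil_Integration.content K = v - u"
          using K(1-3) by auto
        show ?thesis
        proof (cases "x \<in> N")
          case False
          have xin: "x \<in> {p..q} - N" using K False by auto
          have "u \<in> K" "v \<in> K" using K(1-3) by auto
          then have "u \<in> ball x (r x)" "v \<in> ball x (r x)" using K(6) by auto
          then have "\<bar>u - x\<bar> < r x" "\<bar>v - x\<bar> < r x" by (auto simp: dist_real_def abs_minus_commute)
          then have A: "\<bar>\<Phi> v - \<Phi> x - (v - x) * \<phi> x\<bar> \<le> \<epsilon> * \<bar>v - x\<bar>"
            and B: "\<bar>\<Phi> u - \<Phi> x - (u - x) * \<phi> x\<bar> \<le> \<epsilon> * \<bar>u - x\<bar>"
            using K(2-5) by (intro r[OF xin]; (simp add: \<open>\<bar>u - x\<bar> < r x\<close> \<open>\<bar>v - x\<bar> < r x\<close>)?)+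
          have eq: "(v - u) * \<phi> x - (\<Phi> v - \<Phi> u) = (\<Phi> u - \<Phi> x - (u - x) * \<phi> x) - (\<Phi> v - \<Phi> x - (v - x) * \<phi> x)"
            by (simp add: algebra_simps)
          have "\<bar>(v - u) * \<phi> x - (\<Phi> v - \<Phi> u)\<bar> \<le> \<epsilon> * \<bar>u - x\<bar> + \<epsilon> * \<bar>v - x\<bar>"
            unfolding eq using A B abs_triangle_ineq4 by (smt (verit))
          also have "\<dots> = \<epsilon> * (v - u)" using K(2,3) by (simp add: algebra_simps)
          finally show ?thesis using SI False by (simp add: \<psi>_def T_def)
        next
          case True
          show ?thesis
          proof (cases "u = v")
            case True
            then show ?thesis using SI \<open>x \<in> N\<close> by (simp add: \<psi>_def)
          next
            case False
            then have "(x,K) \<in> T" using SI K \<open>x \<in> N\<close> xK by (auto simp: T_def)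
            moreover have "0 \<le> \<epsilon> * (v - u)" using K \<epsilon> by simp
            ultimately show ?thesis using SI \<open>x \<in> N\<close> by (simp add: \<psi>_def abs_minus_commute)
          qed
        qed
      qed
      have sT: "(\<Sum>(x,K)\<in>T. \<bar>\<Phi>(Sup K) - \<Phi>(Inf K)\<bar>) < e/2"
      proof -
        have finT: "finite T" using Dd(1) unfolding T_def by simp
        obtain h where h: "bij_betw h {0..<card T} T" using ex_bij_betw_nat_finite[OF finT] by blast
        define n where "n = card T"
        define X where "X k = Inf (snd (h k))" for k
        define Y where "Y k = Sup (snd (h k))" for k
        have hT: "h k \<in> T" if "k < n" for k using h that unfolding n_def bij_betw_def by auto
        have hK: "snd (h k) = {X k..Y k} \<and> X k < Y k \<and> p \<le> X k \<and> Y k \<le> q \<and> h k \<in> \<D> \<and> fst (h k) \<in> N"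
          if k: "k < n" for k
        proof -
          have hk: "h k \<in> \<D>" "fst (h k) \<in> N" "Henstock_Kurzweil_Integration.content (snd (h k)) \<noteq> 0"
            using hT[OF k] by (auto simp: T_def)
          obtain u v where K: "snd (h k) = {u..v}" "u \<le> v" "p \<le> u" "v \<le> q"
            using Kform[of "fst (h k)" "snd (h k)"] hk(1) by auto
          then have "u < v" using hk(3) by auto
          then show ?thesis using K hk by (auto simp: X_def Y_def)
        qed
        have ok1: "\<forall>k<n. p \<le> X k \<and> X k \<le> Y k \<and> Y k \<le> q"
        proof (intro allI impI)
          fix k assume "k < n"
          then have "X k < Y k" "p \<le> X k" "Y k \<le> q" using hK by blast+
          then show "p \<le> X k \<and> X k \<le> Y k \<and> Y k \<le> q" by simp
        qed
        have ok2: "\<forall>i<n. \<forall>j<n. i \<noteq> j \<longrightarrow> Y i \<le> X j \<or> Y j \<le> X i"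
        proof (intro allI impI)
          fix i j assume ij: "i < n" "j < n" "i \<noteq> j"
          have "h i \<noteq> h j"
            using h ij unfolding bij_betw_def inj_on_def n_def by auto
          have hi: "h i \<in> \<D>" "h j \<in> \<D>" using hK ij by blast+
          have si: "snd (h i) = {X i..Y i}" "snd (h j) = {X j..Y j}" using hK ij by blast+
          have "interior (snd (h i)) \<inter> interior (snd (h j)) = {}"
            by (rule Dd(5)[of "fst (h i)" "snd (h i)" "fst (h j)" "snd (h j)"])
               (use hi \<open>h i \<noteq> h j\<close> in \<open>simp_all add: prod_eq_iff\<close>)
          then have "interior {X i..Y i} \<inter> interior {X j..Y j} = {}" unfolding si .
          then have "{X i<..<Y i} \<inter> {X j<..<Y j} = {}" unfolding interior_atLeastAtMost_real .
          then show "Y i \<le> X j \<or> Y j \<le> X i"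
            using interiors_disjoint_real hK ij by blast
        qed
        have ok: "acok p q n X Y" unfolding acok_def using ok1 ok2 by blast
        have sumeq: "(\<Sum>k<n. g (h k)) = (\<Sum>z\<in>T. g z)" for g :: "real \<times> real set \<Rightarrow> real"
          using sum.reindex_bij_betw[OF h, of g] by (simp add: n_def lessThan_atLeast0)
        have "(\<Sum>k<n. Y k - X k) = (\<Sum>k<n. Henstock_Kurzweil_Integration.content (snd (h k)) * indicator N (fst (h k)))"
        proof (rule sum.cong)
          fix k assume "k \<in> {..<n}"
          then have "snd (h k) = {X k..Y k}" "X k < Y k" "fst (h k) \<in> N" using hK by blast+
          then show "Y k - X k = Henstock_Kurzweil_Integration.content (snd (h k)) * indicator N (fst (h k))"
            by simp
        qed simp
        also have "\<dots> = (\<Sum>z\<in>T. Henstock_Kurzweil_Integration.content (snd z) * indicator N (fst z))"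
          by (rule sumeq)
        also have "\<dots> \<le> (\<Sum>z\<in>\<D>. Henstock_Kurzweil_Integration.content (snd z) * indicator N (fst z))"
          by (rule sum_mono2) (use Dd(1) in \<open>auto simp: T_def\<close>)
        also have "\<dots> < \<delta>"
          using G0[OF D fine0] by (simp add: split_beta)
        finally have "(\<Sum>k<n. Y k - X k) < \<delta>" .
        then have "(\<Sum>k<n. \<bar>\<Phi> (Y k) - \<Phi> (X k)\<bar>) < e/2" using H ok by blast
        moreover have "(\<Sum>k<n. \<bar>\<Phi> (Y k) - \<Phi> (X k)\<bar>) = (\<Sum>(x,K)\<in>T. \<bar>\<Phi>(Sup K) - \<Phi>(Inf K)\<bar>)"
          unfolding X_def Y_def using sumeq[of "\<lambda>z. \<bar>\<Phi>(Sup (snd z)) - \<Phi>(Inf (snd z))\<bar>"] by (simp add: split_beta)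
        ultimately show ?thesis by simp
      qed
      have "norm ((\<Sum>(x,k)\<in>\<D>. Henstock_Kurzweil_Integration.content k *\<^sub>R \<psi> x) - (\<Phi> q - \<Phi> p))
          = \<bar>(\<Sum>(x,K)\<in>\<D>. Henstock_Kurzweil_Integration.content K * \<psi> x - (\<Phi>(Sup K) - \<Phi>(Inf K)))\<bar>"
        by (simp add: sumPhi[symmetric] sum_subtractf split_beta)
      also have "\<dots> \<le> (\<Sum>(x,K)\<in>\<D>. \<bar>Henstock_Kurzweil_Integration.content K * \<psi> x - (\<Phi>(Sup K) - \<Phi>(Inf K))\<bar>)"
        by (rule sum_abs[THEN order_trans]) (simp add: split_beta)
      also have "\<dots> \<le> (\<Sum>(x,K)\<in>\<D>. \<epsilon> * Henstock_Kurzweil_Integration.content K +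
          (if (x,K) \<in> T then \<bar>\<Phi>(Sup K) - \<Phi>(Inf K)\<bar> else 0))"
        by (rule sum_mono) (use tb in auto)
      also have "\<dots> = \<epsilon> * (q - p) + (\<Sum>(x,K)\<in>T. \<bar>\<Phi>(Sup K) - \<Phi>(Inf K)\<bar>)"
      proof -
        have "(\<Sum>(x,K)\<in>\<D>. (if (x,K) \<in> T then \<bar>\<Phi>(Sup K) - \<Phi>(Inf K)\<bar> else 0))
            = (\<Sum>(x,K)\<in>T. \<bar>\<Phi>(Sup K) - \<Phi>(Inf K)\<bar>)"
          using Dd(1) unfolding T_def by (simp add: sum.If_cases split_beta Int_def)
        then show ?thesis
          by (simp add: sum.distrib sum_distrib_left[symmetric] split_beta sumC[unfolded split_beta])
      qed
      also have "\<dots> < e"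
      proof -
        have "\<epsilon> * (q - p) \<le> e / 2" using e pq unfolding \<epsilon>_def by (simp add: field_simps)
        then show ?thesis using sT by linarith
      qed
      finally show "norm ((\<Sum>(x,k)\<in>\<D>. Henstock_Kurzweil_Integration.content k *\<^sub>R \<psi> x) - (\<Phi> q - \<Phi> p)) < e" .
    qed
  qed
  then show ?thesis
    by (rule has_integral_spike[OF N, rotated]) (simp add: \<psi>_def)
qed



lemma setting_N:
  assumes "AC_L2_setting a b f f'"
  obtains N where "negligible N"
    "\<And>t. t \<in> {a..b} - N \<Longrightarrow> (f has_real_derivative f' t) (at t within {a..b})"
proof -
  have "AE t in lebesgue_on {a..b}. (f has_real_derivative f' t) (at t within {a..b})"
    using assms by (simp add: AC_L2_setting_def)
  then have "AE t in lebesgue. t \<in> {a..b} \<longrightarrow> (f has_real_derivative f' t) (at t within {a..b})"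
    by (subst (asm) AE_restrict_space_iff) auto
  then obtain N where N: "{t \<in> space lebesgue. \<not> (t \<in> {a..b} \<longrightarrow> (f has_real_derivative f' t) (at t within {a..b}))} \<subseteq> N"
    "emeasure lebesgue N = 0" "N \<in> sets lebesgue"
    by (erule AE_E)
  have "negligible N" using N(2,3) by (simp add: negligible_iff_emeasure0)
  moreover have "\<And>t. t \<in> {a..b} - N \<Longrightarrow> (f has_real_derivative f' t) (at t within {a..b})"
    using N(1) by auto
  ultimately show ?thesis by (rule that)
qed

lemma setting_ftc:
  assumes S: "AC_L2_setting a b f f'"
  shows "(f' has_integral (f b - f a)) {a..b}"
proof -
  obtain N where N: "negligible N"
    "\<And>t. t \<in> {a..b} - N \<Longrightarrow> (f has_real_derivative f' t) (at t within {a..b})"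
    using setting_N[OF S] by blast
  show ?thesis
    using S N by (intro ftc_ac) (auto simp: AC_L2_setting_def)
qed

lemma parts_piece:
  assumes S: "AC_L2_setting a b f f'" and sub: "a \<le> p" "p \<le> q" "q \<le> b"
  shows "((\<lambda>t. (t - c) * f' t) has_integral ((q - c) * f q - (p - c) * f p - integral {p..q} f)) {p..q}"
proof -
  obtain N where N: "negligible N"
    "\<And>t. t \<in> {a..b} - N \<Longrightarrow> (f has_real_derivative f' t) (at t within {a..b})"
    using setting_N[OF S] by blast
  have acpq: "abs_continuous_on p q f"
    using ac_sub[of a b f p q] S sub by (simp add: AC_L2_setting_def)
  have cont: "continuous_on {p..q} f" by (rule ac_cont[OF acpq])
  have "bounded (f ` {p..q})"
    by (intro compact_imp_bounded compact_continuous_image cont) simp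
  then obtain B0 where B0: "\<And>t. t \<in> {p..q} \<Longrightarrow> \<bar>f t\<bar> \<le> B0" unfolding bounded_real by blast
  define B where "B = \<bar>B0\<bar>"
  have B: "B \<ge> 0" "\<And>t. t \<in> {p..q} \<Longrightarrow> \<bar>f t\<bar> \<le> B" using B0 unfolding B_def by (auto, force)
  define M where "M = \<bar>p - c\<bar> + \<bar>q - c\<bar>"
  have M: "M \<ge> 0" "\<And>t. t \<in> {p..q} \<Longrightarrow> \<bar>t - c\<bar> \<le> M" by (auto simp: M_def)
  define H where "H t = (t - c) * f t" for t
  have acH: "abs_continuous_on p q H"
  proof (rule ac_dom[OF acpq M(1) B(1)])
    fix x y assume xy: "p \<le> x" "x \<le> y" "y \<le> q"
    have "H y - H x = (y - c) * (f y - f x) + (y - x) * f x" by (simp add: H_def algebra_simps)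
    then have "\<bar>H y - H x\<bar> \<le> \<bar>(y - c) * (f y - f x)\<bar> + \<bar>(y - x) * f x\<bar>"
      by (metis abs_triangle_ineq)
    also have "\<dots> = \<bar>y - c\<bar> * \<bar>f y - f x\<bar> + (y - x) * \<bar>f x\<bar>"
      using xy by (simp add: abs_mult)
    also have "\<dots> \<le> M * \<bar>f y - f x\<bar> + (y - x) * B"
    proof (rule add_mono)
      show "\<bar>y - c\<bar> * \<bar>f y - f x\<bar> \<le> M * \<bar>f y - f x\<bar>"
        using xy M(2)[of y] by (intro mult_right_mono) auto
      show "(y - x) * \<bar>f x\<bar> \<le> (y - x) * B"
        using xy B(2)[of x] by (intro mult_left_mono) auto
    qed
    finally show "\<bar>H y - H x\<bar> \<le> M * \<bar>f y - f x\<bar> + B * (y - x)" by (simp add: mult.commute)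
  qed
  have der: "(H has_real_derivative (f t + (t - c) * f' t)) (at t within {p..q})"
    if t: "t \<in> {p..q} - N" for t
  proof -
    have "(f has_real_derivative f' t) (at t within {p..q})"
      by (rule DERIV_subset[of _ _ _ "{a..b}", OF N(2)]) (use t sub in auto)
    moreover have d1: "((\<lambda>x. x - c) has_real_derivative 1) (at t within {p..q})"
      by (auto intro!: derivative_eq_intros)
    ultimately have "((\<lambda>t. (t - c) * f t) has_real_derivative (1 * f t + f' t * (t - c))) (at t within {p..q})"
      using DERIV_mult[OF d1] by blast
    moreover have "H = (\<lambda>t. (t - c) * f t)" by (simp add: H_def fun_eq_iff)
    ultimately show ?thesis by (simp add: mult.commute)
  qed
  have I1: "((\<lambda>t. f t + (t - c) * f' t) has_integral (H q - H p)) {p..q}"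
    by (rule ftc_ac[OF sub(2) acH N(1) der])
  have I2: "(f has_integral integral {p..q} f) {p..q}"
    using integrable_continuous_interval[OF cont] by (simp add: has_integral_integral)
  have "((\<lambda>t. (f t + (t - c) * f' t) - f t) has_integral (H q - H p - integral {p..q} f)) {p..q}"
    by (rule has_integral_diff[OF I1 I2])
  then show ?thesis by (simp add: H_def)
qed



lemma has_integral_pieces:
  fixes F :: "real \<Rightarrow> real \<Rightarrow> real"
  assumes le: "a \<le> x" "x \<le> y" "y \<le> b"
    and I1: "(F a has_integral I1) {a..x}" and I2: "(F m has_integral I2) {x..y}"
    and I3: "(F b has_integral I3) {y..b}"
  shows "((\<lambda>t. F (if t \<le> x then a else if t \<le> y then m else b) t) has_integral (I1 + I2 + I3)) {a..b}"
proof -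
  let ?G = "\<lambda>t. F (if t \<le> x then a else if t \<le> y then m else b) t"
  have 1: "(?G has_integral I1) {a..x}"
    by (rule has_integral_spike[OF negligible_empty _ I1]) auto
  have 2: "(?G has_integral I2) {x..y}"
    by (rule has_integral_spike[OF negligible_sing[of x] _ I2]) (use le in auto)
  have 3: "(?G has_integral I3) {y..b}"
    by (rule has_integral_spike[OF negligible_sing[of y] _ I3]) (use le in auto)
  have "(?G has_integral (I1 + I2)) {a..y}"
    by (rule has_integral_combine[OF le(1,2) 1 2])
  then show ?thesis
    using has_integral_combine[OF _ le(3) _ 3] le by simp
qed

lemma int_lin:
  fixes p q c :: real
  assumes "p \<le> q"
  shows "((\<lambda>t. t - c) has_integral ((q - c)^2/2 - (p - c)^2/2)) {p..q}"
proof -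
  have "((\<lambda>t. (t - c)^2/2) has_vector_derivative (t - c)) (at t within {p..q})" for t
    unfolding has_real_derivative_iff_has_vector_derivative[symmetric]
    by (auto intro!: derivative_eq_intros)
  then show ?thesis
    using fundamental_theorem_of_calculus[OF assms, of "\<lambda>t. (t - c)^2/2" "\<lambda>t. t - c"] by simp
qed

lemma int_sq:
  fixes p q c :: real
  assumes "p \<le> q"
  shows "((\<lambda>t. (t - c)^2) has_integral ((q - c)^3/3 - (p - c)^3/3)) {p..q}"
proof -
  have "((\<lambda>t. (t - c)^3/3) has_vector_derivative (t - c)^2) (at t within {p..q})" for t
    unfolding has_real_derivative_iff_has_vector_derivative[symmetric]
    by (auto intro!: derivative_eq_intros)
  then show ?thesis
    using fundamental_theorem_of_calculus[OF assms, of "\<lambda>t. (t - c)^3/3" "\<lambda>t. (t - c)^2"] by simp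
qed



lemma main_ineq:
  assumes S: "AC_L2_setting a b f f'" and xr: "x \<in> {a..(a+b)/2}"
  shows "trap_lhs a b f x \<le> trap_bound (1/48) a b f f' x"
proof -
  have ab: "a < b" using S by (simp add: AC_L2_setting_def)
  define h where "h = b - a"
  have h: "h > 0" using ab h_def by simp
  define m where "m = (a + b)/2"
  define y where "y = a + b - x"
  have le: "a \<le> x" "x \<le> y" "y \<le> b" "x \<le> m" "m \<le> y" using xr by (auto simp: y_def m_def)
  have ac: "abs_continuous_on a b f" using S by (simp add: AC_L2_setting_def)
  have cont: "continuous_on {a..b} f" by (rule ac_cont[OF ac])
  have LINTf: "(LINT t|lebesgue_on {a..b}. f t) = integral {a..b} f"
    by (rule lebesgue_integral_eq_integral[OF continuous_imp_integrable_real[OF cont]]) simp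
  have sqint: "integrable (lebesgue_on {a..b}) (\<lambda>t. (f' t)\<^sup>2)" using S by (simp add: AC_L2_setting_def)
  define G where "G = (LINT t|lebesgue_on {a..b}. (f' t)\<^sup>2)"
  have IG: "((\<lambda>t. (f' t)\<^sup>2) has_integral G) {a..b}"
    unfolding G_def by (rule has_integral_integral_lebesgue_on[OF sqint]) simp
  have Ig: "(f' has_integral (f b - f a)) {a..b}" by (rule setting_ftc[OF S])
  define Kc where "Kc t = (if t \<le> x then a else if t \<le> y then m else b)" for t
  have P1: "((\<lambda>t. (t - a) * f' t) has_integral ((x - a) * f x - (a - a) * f a - integral {a..x} f)) {a..x}"
    by (rule parts_piece[OF S]) (use le in auto)
  have P2: "((\<lambda>t. (t - m) * f' t) has_integral ((y - m) * f y - (x - m) * f x - integral {x..y} f)) {x..y}"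
    by (rule parts_piece[OF S]) (use le in auto)
  have P3: "((\<lambda>t. (t - b) * f' t) has_integral ((b - b) * f b - (y - b) * f y - integral {y..b} f)) {y..b}"
    by (rule parts_piece[OF S]) (use le in auto)
  define A where "A = ((x - a) * f x - (a - a) * f a - integral {a..x} f) +
     ((y - m) * f y - (x - m) * f x - integral {x..y} f) + ((b - b) * f b - (y - b) * f y - integral {y..b} f)"
  have IKg: "((\<lambda>t. (t - Kc t) * f' t) has_integral A) {a..b}"
    using has_integral_pieces[where F="\<lambda>c t. (t - c) * f' t", OF le(1-3) P1 P2 P3]
    unfolding Kc_def A_def by simp
  have s: "integral {a..x} f + integral {x..y} f + integral {y..b} f = integral {a..b} f"
  proof -
    have i1: "f integrable_on {x..b}" "f integrable_on {a..b}"
      using le by (auto intro!: integrable_continuous_interval continuous_on_subset[OF cont])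
    have "integral {x..y} f + integral {y..b} f = integral {x..b} f"
      using Henstock_Kurzweil_Integration.integral_combine[where a=x and c=y and b=b and f=f] le i1 by simp
    moreover have "integral {a..x} f + integral {x..b} f = integral {a..b} f"
      using Henstock_Kurzweil_Integration.integral_combine[where a=a and c=x and b=b and f=f] le i1 by simp
    ultimately show ?thesis by simp
  qed
  have A_eq: "A = h/2 * (f x + f y) - integral {a..b} f"
  proof -
    have "A = (m - a) * f x + (b - m) * f y - (integral {a..x} f + integral {x..y} f + integral {y..b} f)"
      unfolding A_def y_def by (simp add: algebra_simps)
    also have "\<dots> = h/2 * (f x + f y) - integral {a..b} f"
      unfolding s by (simp add: m_def h_def field_simps)
    finally show ?thesis .
  qed
  have IK: "((\<lambda>t. t - Kc t) has_integral 0) {a..b}"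
  proof -
    have I0: "((\<lambda>t. t - Kc t) has_integral (((x - a)^2/2 - (a - a)^2/2) + ((y - m)^2/2 - (x - m)^2/2)
        + ((b - b)^2/2 - (y - b)^2/2))) {a..b}"
      using has_integral_pieces[where F="\<lambda>c t. t - c", OF le(1-3) int_lin int_lin int_lin] le
      unfolding Kc_def by simp
    have E0: "((x - a)^2/2 - (a - a)^2/2) + ((y - m)^2/2 - (x - m)^2/2)
        + ((b - b)^2/2 - (y - b)^2/2) = 0"
      unfolding y_def m_def by (simp add: power2_eq_square field_simps)
    show ?thesis using I0 unfolding E0 .
  qed
  define P where "P = h * (h\<^sup>2/48 + (x - (3*a + b)/4)\<^sup>2)"
  have IK2: "((\<lambda>t. (t - Kc t)\<^sup>2) has_integral P) {a..b}"
  proof -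
    have I0: "((\<lambda>t. (t - Kc t)^2) has_integral (((x - a)^3/3 - (a - a)^3/3) + ((y - m)^3/3 - (x - m)^3/3)
        + ((b - b)^3/3 - (y - b)^3/3))) {a..b}"
      using has_integral_pieces[where F="\<lambda>c t. (t - c)^2", OF le(1-3) int_sq int_sq int_sq] le
      unfolding Kc_def by simp
    have E0: "((x - a)^3/3 - (a - a)^3/3) + ((y - m)^3/3 - (x - m)^3/3)
        + ((b - b)^3/3 - (y - b)^3/3) = P"
      unfolding y_def m_def P_def h_def by (simp add: power2_eq_square power3_eq_cube field_simps)
    show ?thesis using I0 unfolding E0 .
  qed
  have Ppos: "P > 0" using h unfolding P_def by (intro mult_pos_pos) (auto intro: add_pos_nonneg)
  define c0 where "c0 = (f b - f a)/h"
  define \<sigma> where "\<sigma> = G - (f b - f a)\<^sup>2/h"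
  have I1: "((\<lambda>t. 1::real) has_integral h) {a..b}" using has_integral_const_real[of "1::real" a b] ab h_def by simp
  define E where "E t = P\<^sup>2 * (f' t)\<^sup>2 + (-2*P\<^sup>2*c0) * f' t + (P\<^sup>2*c0\<^sup>2) * 1 + (-2*P*A) * ((t - Kc t) * f' t)
      + (2*P*A*c0) * (t - Kc t) + A\<^sup>2 * (t - Kc t)\<^sup>2" for t
  have IE: "(E has_integral (P\<^sup>2 * G + (-2*P\<^sup>2*c0) * (f b - f a) + (P\<^sup>2*c0\<^sup>2) * h + (-2*P*A) * A
      + (2*P*A*c0) * 0 + A\<^sup>2 * P)) {a..b}"
    unfolding E_def by (intro has_integral_add has_integral_mult_right IG Ig I1 IKg IK IK2)
  have Enn: "0 \<le> E t" for t
  proof -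
    have "E t = (P * (f' t - c0) - A * (t - Kc t))\<^sup>2"
      unfolding E_def by (simp add: power2_eq_square algebra_simps)
    then show ?thesis by simp
  qed
  have "0 \<le> P\<^sup>2 * G + (-2*P\<^sup>2*c0) * (f b - f a) + (P\<^sup>2*c0\<^sup>2) * h + (-2*P*A) * A
      + (2*P*A*c0) * 0 + A\<^sup>2 * P"
    using has_integral_nonneg[OF IE Enn] .
  also have "P\<^sup>2 * G + (-2*P\<^sup>2*c0) * (f b - f a) + (P\<^sup>2*c0\<^sup>2) * h + (-2*P*A) * A
      + (2*P*A*c0) * 0 + A\<^sup>2 * P = P * (P * \<sigma> - A\<^sup>2)"
    unfolding \<sigma>_def c0_def using h by (simp add: power2_eq_square field_simps)
  finally have "0 \<le> P * (P * \<sigma> - A\<^sup>2)" .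
  then have key: "A\<^sup>2 \<le> P * \<sigma>" using Ppos by (simp add: zero_le_mult_iff)
  have lhs: "trap_lhs a b f x = \<bar>A\<bar> / h"
  proof -
    have "(f x + f (a + b - x)) / 2 - (1 / (b - a)) * (LINT t|lebesgue_on {a..b}. f t) = A / h"
      using h unfolding LINTf A_eq y_def h_def by (simp add: field_simps)
    then show ?thesis using h by (simp add: trap_lhs_def)
  qed
  have rhs: "trap_bound (1/48) a b f f' x = sqrt P * sqrt \<sigma> / h"
  proof -
    have sq: "sqrt h * sqrt h = h" using h by simp
    have hp: "h powr (-1/2) = 1 / sqrt h"
    proof -
      have "h powr (-1/2) * h powr (1/2) = 1" using h by (simp add: powr_add[symmetric])
      moreover have "h powr (1/2) = sqrt h" using h by (simp add: powr_half_sqrt)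
      ultimately show ?thesis using h by (simp add: field_simps)
    qed
    have "1/48 * (b - a)\<^sup>2 + (x - (3*a + b)/4)\<^sup>2 = P / h"
      unfolding P_def h_def using h h_def by (simp add: field_simps)
    moreover have "sigma a b f f' = \<sigma>" unfolding sigma_def \<sigma>_def G_def h_def ..
    ultimately have "trap_bound (1/48) a b f f' x = h powr (-1/2) * sqrt (P / h) * sqrt \<sigma>"
      unfolding trap_bound_def h_def by simp
    also have "\<dots> = sqrt P * sqrt \<sigma> / h"
      unfolding hp real_sqrt_divide using sq h by (simp add: field_simps)
    finally show ?thesis .
  qed
  have "\<bar>A\<bar> \<le> sqrt P * sqrt \<sigma>"
    unfolding real_sqrt_mult[symmetric] using key real_sqrt_abs real_sqrt_le_mono by metis
  then show ?thesis unfolding lhs rhs using h by (simp add: divide_right_mono)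
qed



lemma ac_zero: "abs_continuous_on a b (\<lambda>_. 0)"
  unfolding ac_iff by (auto intro!: exI[of _ 1])

lemma sharp:
  assumes C: "C < 1/48"
  shows "\<exists>a b f f' x. AC_L2_setting a b f f' \<and> x \<in> {a..(a+b)/2} \<and>
            trap_lhs a b f x > trap_bound C a b f f' x"
proof -
  define f :: "real \<Rightarrow> real" where "f t = (t - 1/2)^2 / 2" for t
  define f' :: "real \<Rightarrow> real" where "f' t = t - 1/2" for t
  have ac: "abs_continuous_on 0 1 f"
  proof (rule ac_dom[OF ac_zero, of 0 "1/2"])
    fix x y :: real assume xy: "0 \<le> x" "x \<le> y" "y \<le> 1"
    have eq: "f y - f x = (y - x) * (x + y - 1) / 2" unfolding f_def by (simp add: field_simps power2_eq_square)
    have "\<bar>f y - f x\<bar> = \<bar>(y - x) * (x + y - 1)\<bar> / 2" unfolding eq by simp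
    also have "\<dots> = (y - x) * \<bar>x + y - 1\<bar> / 2" using xy by (simp add: abs_mult)
    also have "\<dots> \<le> (y - x) * 1 / 2" using xy by (intro divide_right_mono mult_left_mono) auto
    finally show "\<bar>f y - f x\<bar> \<le> 0 * \<bar>0 - 0\<bar> + 1/2 * (y - x)" by simp
  qed auto
  have der: "(f has_real_derivative f' t) (at t within {0..1})" for t
    unfolding f_def f'_def by (auto intro!: derivative_eq_intros)
  have contf': "continuous_on {0..1} f'" unfolding f'_def by (intro continuous_intros)
  have contf: "continuous_on {0..1} f" unfolding f_def by (intro continuous_intros) auto
  have meas: "f' \<in> borel_measurable (lebesgue_on {0..1})"
    using continuous_imp_integrable_real[OF contf'] by (rule borel_measurable_integrable)
  have sqint: "integrable (lebesgue_on {0..1}) (\<lambda>t. (f' t)\<^sup>2)"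
    by (rule continuous_imp_integrable_real) (use contf' in \<open>intro continuous_intros\<close>)
  have S: "AC_L2_setting 0 1 f f'"
    unfolding AC_L2_setting_def using ac der meas sqint by (auto intro!: AE_I2)
  have I2: "((\<lambda>t. (f' t)\<^sup>2) has_integral 1/12) {0..1}"
    using int_sq[of 0 1 "1/2"] by (simp add: f'_def power3_eq_cube)
  have L2: "(LINT t|lebesgue_on {0..1}. (f' t)\<^sup>2) = 1/12"
    using lebesgue_integral_eq_integral[OF sqint] I2 by (simp add: integral_unique)
  have I1: "(f has_integral 1/24) {0..1}"
  proof -
    have fdef: "f = (\<lambda>t. (t - 1/2)^2 / 2)" by (simp add: fun_eq_iff f_def)
    show ?thesis
      using has_integral_mult_left[OF int_sq[of 0 1 "1/2"], of "1/2"] unfolding fdef by (simp add: power3_eq_cube)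
  qed
  have L1: "(LINT t|lebesgue_on {0..1}. f t) = 1/24"
    using lebesgue_integral_eq_integral[OF continuous_imp_integrable_real[OF contf]] I1
    by (simp add: integral_unique)
  have lhs: "trap_lhs 0 1 f 0 = 1/12"
    unfolding trap_lhs_def L1 by (simp add: f_def power2_eq_square)
  have sig: "sigma 0 1 f f' = 1/12"
    unfolding sigma_def L2 by (simp add: f_def)
  have rhs: "trap_bound C 0 1 f f' 0 = sqrt (C + 1/16) * sqrt (1/12)"
    unfolding trap_bound_def sig by (simp add: power2_eq_square)
  have "sqrt (C + 1/16) < sqrt (1/12)" using C by simp
  then have "sqrt (C + 1/16) * sqrt (1/12) < sqrt (1/12) * sqrt (1/12)"
    by (intro mult_strict_right_mono) auto
  also have "\<dots> = 1/12" by (simp add: real_sqrt_mult[symmetric])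
  finally have "trap_lhs 0 1 f 0 > trap_bound C 0 1 f f' 0" unfolding lhs rhs .
  then show ?thesis using S by (intro exI[of _ 0] exI[of _ 1] exI[of _ f] exI[of _ f'] exI[of _ 0]) auto
qed

theorem theorem2p3:
  shows "(\<forall>a b f f' x. AC_L2_setting a b f f' \<and> x \<in> {a..(a+b)/2} \<longrightarrow>
            trap_lhs a b f x \<le> trap_bound (1/48) a b f f' x)
       \<and> (\<forall>C < 1/48. \<exists>a b f f' x. AC_L2_setting a b f f' \<and> x \<in> {a..(a+b)/2} \<and>
            trap_lhs a b f x > trap_bound C a b f f' x)"
  using main_ineq sharp by blast

end
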